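(* Let $R\subseteq\{e,c,w\}$. $\mathbf{NACCLL}^-_R$ is strongly conservative over $\mathbf{InFNL}_R$, and $\mathbf{NACCLL}_R$ is strongly conservative over $\mathbf{CyInFNL}_R$: for every set $\mathcal S\cup\{s\}$ of $\mathcal L^0$-sequents (sequents not containing $!$), $\mathcal S\vdash_{\mathbf{NACCLL}^-_R}s\iff\mathcal S\vdash_{\mathbf{InFNL}_R}s$, and $\mathcal S\vdash_{\mathbf{NACCLL}_R}s\iff\mathcal S\vdash_{\mathbf{CyInFNL}_R}s$.
   Context: Formulas: terms over a countably infinite set of variables in $\{\wedge,\vee,\cdot,\backslash,/,!,1,0\}$; $\mathcal L^0$-formulas are those without $!$. Structures: elements of the free unital groupoid $(Fm^\circ,\circ,\varepsilon)$ generated by formulas ($\circ$ non-associative, $\varepsilon$ empty structure and unit). $k$ ranges over structures in the free unital groupoid generated by formulas $!a$ (including $\varepsilon$). A context $u$ is a structure with exactly one hole; $u(x)$ fills it. A sequent is $x\Rightarrow\delta$, $\delta$ a formula or the empty stoup $\epsilon$. $\mathbf{NACILL}^0$: initial sequents $a\Rightarrow a$, $\varepsilon\Rightarrow 1$, $0\Rightarrow\epsilon$; rules (premises / conclusion): (cut) $x\Rightarrow a$, $u(a)\Rightarrow\delta$ / $u(x)\Rightarrow\delta$; $(1\Rightarrow)$ $u(\varepsilon)\Rightarrow\delta$ / $u(1)\Rightarrow\delta$; $(\Rightarrow 0)$ $x\Rightarrow\epsilon$ / $x\Rightarrow 0$; $(\backslash\Rightarrow)$ $x\Rightarrow a$,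 $u(b)\Rightarrow\delta$ / $u(x\circ(a\backslash b))\Rightarrow\delta$; $(\Rightarrow\backslash)$ $a\circ x\Rightarrow b$ / $x\Rightarrow a\backslash b$; $(/\Rightarrow)$ $x\Rightarrow a$, $u(b)\Rightarrow\delta$ / $u((b/a)\circ x)\Rightarrow\delta$; $(\Rightarrow/)$ $x\circ a\Rightarrow b$ / $x\Rightarrow b/a$; $(\cdot\Rightarrow)$ $u(a\circ b)\Rightarrow\delta$ / $u(a\cdot b)\Rightarrow\delta$; $(\Rightarrow\cdot)$ $x\Rightarrow a$, $y\Rightarrow b$ / $x\circ y\Rightarrow a\cdot b$; $(\wedge\Rightarrow)$ $u(a_i)\Rightarrow\delta$ / $u(a_1\wedge a_2)\Rightarrow\delta$; $(\Rightarrow\wedge)$ $x\Rightarrow a$, $x\Rightarrow b$ / $x\Rightarrow a\wedge b$; $(\vee\Rightarrow)$ $u(a)\Rightarrow\delta$, $u(b)\Rightarrow\delta$ / $u(a\vee b)\Rightarrow\delta$; $(\Rightarrow\vee)$ $x\Rightarrow a_i$ / $x\Rightarrow a_1\vee a_2$; $(!\Rightarrow)$ $u(a)\Rightarrow\delta$ / $u(!a)\Rightarrow\delta$; $(\Rightarrow!)$ $k\Rightarrow a$ / $k\Rightarrow !a$; $(kw)$ $u(\varepsilon)\Rightarrow\delta$ / $u(k)\Rightarrow\delta$; $(kc)$ $u(k\circ k)\Rightarrow\delta$ / $u(k)\Rightarrow\delta$; two-directional: $(ke)$ $u(k\circ y)\Rightarrow\delta\leftrightarrow u(y\circ k)\Rightarrow\delta$;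 $(ka1)$ $u((k\circ y)\circ z)\Rightarrow\delta\leftrightarrow u(k\circ(y\circ z))\Rightarrow\delta$; $(ka2)$ $u((x\circ y)\circ k)\Rightarrow\delta\leftrightarrow u(x\circ(y\circ k))\Rightarrow\delta$. $\mathbf{NACCLL}^-$: $\mathbf{NACILL}^0$ plus initial sequents ${\sim}(-a)\Rightarrow a$, $-({\sim}a)\Rightarrow a$, $({\sim}a)/b\Rightarrow a\backslash(-b)$, $a\backslash(-b)\Rightarrow({\sim}a)/b$, where ${\sim}a:=a\backslash 0$, $-a:=0/a$. $\mathbf{NACCLL}$: additionally ${\sim}a\Rightarrow -a$ and $-a\Rightarrow{\sim}a$. $\mathbf{InFNL}$ ($\mathbf{CyInFNL}$): the $!$-free fragment of $\mathbf{NACCLL}^-$ ($\mathbf{NACCLL}$), i.e. only $!$-free formulas and without the rules $(!\Rightarrow),(\Rightarrow!),(kw),(kc),(ke),(ka1),(ka2)$. Structural rules: $(e)$ $u(x\circ y)\Rightarrow\delta$ / $u(y\circ x)\Rightarrow\delta$; $(c)$ $u(x\circ x)\Rightarrow\delta$ / $u(x)\Rightarrow\delta$; $(i)$ $u(\varepsilon)\Rightarrow\delta$ / $u(x)\Rightarrow\delta$; $(o)$ $x\Rightarrow\epsilon$ / $x\Rightarrow a$; $(w)$ means both $(i)$ and $(o)$. Subscript $R$ adds the rules in $R$. $\mathcal S\vdash s$: there is a derivation of $s$ whose leaves are initial sequents or members of $\mathcal S$. *)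

theory Defs
  imports Main
begin

datatype fm =
    Var nat
  | Meet fm fm
  | Join fm fm
  | Prod fm fm
  | LDiv fm fm
  | RDiv fm fm          (* RDiv b a = b / a *)
  | Bang fm
  | One
  | Zero

fun bangfree :: "fm \<Rightarrow> bool" where
  "bangfree (Var n) = True"
| "bangfree (Meet a b) = (bangfree a \<and> bangfree b)"
| "bangfree (Join a b) = (bangfree a \<and> bangfree b)"
| "bangfree (Prod a b) = (bangfree a \<and> bangfree b)"
| "bangfree (LDiv a b) = (bangfree a \<and> bangfree b)"
| "bangfree (RDiv a b) = (bangfree a \<and> bangfree b)"
| "bangfree (Bang a) = False"
| "bangfree One = True"
| "bangfree Zero = True"

(* structures: terms of the free unital groupoid; identified modulo the unit laws
   via the normal form function snorm below *)
datatype st = Fm fm | Comp st st | Emp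

fun snorm :: "st \<Rightarrow> st" where
  "snorm (Fm a) = Fm a"
| "snorm Emp = Emp"
| "snorm (Comp x y) =
     (let x' = snorm x; y' = snorm y in
      if x' = Emp then y' else if y' = Emp then x' else Comp x' y')"

fun st_bangfree :: "st \<Rightarrow> bool" where
  "st_bangfree (Fm a) = bangfree a"
| "st_bangfree Emp = True"
| "st_bangfree (Comp x y) = (st_bangfree x \<and> st_bangfree y)"

fun is_k :: "st \<Rightarrow> bool" where
  "is_k (Fm (Bang a)) = True"
| "is_k (Fm _) = False"
| "is_k Emp = True"
| "is_k (Comp x y) = (is_k x \<and> is_k y)"

datatype ctx = Hole | CL ctx st | CR st ctx

fun fill :: "ctx \<Rightarrow> st \<Rightarrow> st" where
  "fill Hole x = x"
| "fill (CL u y) x = Comp (fill u x) y"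
| "fill (CR y u) x = Comp y (fill u x)"

(* sequent x \<Rightarrow> \<delta>; None is the empty stoup *)
type_synonym seq = "st \<times> fm option"

definition seq_norm :: "seq \<Rightarrow> seq" where
  "seq_norm s = (snorm (fst s), snd s)"

definition L0_seq :: "seq \<Rightarrow> bool" where
  "L0_seq s = (st_bangfree (fst s) \<and> (case snd s of None \<Rightarrow> True | Some a \<Rightarrow> bangfree a))"

definition neg_l :: "fm \<Rightarrow> fm" where
  "neg_l a = LDiv a Zero"

definition neg_r :: "fm \<Rightarrow> fm" where
  "neg_r a = RDiv Zero a"

(* structural rules: e, c, w (w = i and o) *)
datatype sr = SE | SC | SW

(* rl cyc bng R ps c : c follows from premises ps by one rule (or is initial, ps = []).
   cyc: add the cyclicity initial sequents (NACCLL / CyInFNL);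
   bng: include the exponential rules (NACCLL-family) *)
inductive rl :: "bool \<Rightarrow> bool \<Rightarrow> sr set \<Rightarrow> seq list \<Rightarrow> seq \<Rightarrow> bool"
  for cyc :: bool and bng :: bool and R :: "sr set" where
  ax: "rl cyc bng R [] (Fm a, Some a)"
| one_ax: "rl cyc bng R [] (Emp, Some One)"
| zero_ax: "rl cyc bng R [] (Fm Zero, None)"
| inv1: "rl cyc bng R [] (Fm (neg_l (neg_r a)), Some a)"
| inv2: "rl cyc bng R [] (Fm (neg_r (neg_l a)), Some a)"
| inv3: "rl cyc bng R [] (Fm (RDiv (neg_l a) b), Some (LDiv a (neg_r b)))"
| inv4: "rl cyc bng R [] (Fm (LDiv a (neg_r b)), Some (RDiv (neg_l a) b))"
| cy1: "cyc \<Longrightarrow> rl cyc bng R [] (Fm (neg_l a), Some (neg_r a))"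
| cy2: "cyc \<Longrightarrow> rl cyc bng R [] (Fm (neg_r a), Some (neg_l a))"
| cut: "rl cyc bng R [(x, Some a), (fill u (Fm a), d)] (fill u x, d)"
| oneL: "rl cyc bng R [(fill u Emp, d)] (fill u (Fm One), d)"
| zeroR: "rl cyc bng R [(x, None)] (x, Some Zero)"
| ldivL: "rl cyc bng R [(x, Some a), (fill u (Fm b), d)] (fill u (Comp x (Fm (LDiv a b))), d)"
| ldivR: "rl cyc bng R [(Comp (Fm a) x, Some b)] (x, Some (LDiv a b))"
| rdivL: "rl cyc bng R [(x, Some a), (fill u (Fm b), d)] (fill u (Comp (Fm (RDiv b a)) x), d)"
| rdivR: "rl cyc bng R [(Comp x (Fm a), Some b)] (x, Some (RDiv b a))"
| prodL: "rl cyc bng R [(fill u (Comp (Fm a) (Fm b)), d)] (fill u (Fm (Prod a b)), d)"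
| prodR: "rl cyc bng R [(x, Some a), (y, Some b)] (Comp x y, Some (Prod a b))"
| meetL1: "rl cyc bng R [(fill u (Fm a), d)] (fill u (Fm (Meet a b)), d)"
| meetL2: "rl cyc bng R [(fill u (Fm b), d)] (fill u (Fm (Meet a b)), d)"
| meetR: "rl cyc bng R [(x, Some a), (x, Some b)] (x, Some (Meet a b))"
| joinL: "rl cyc bng R [(fill u (Fm a), d), (fill u (Fm b), d)] (fill u (Fm (Join a b)), d)"
| joinR1: "rl cyc bng R [(x, Some a)] (x, Some (Join a b))"
| joinR2: "rl cyc bng R [(x, Some b)] (x, Some (Join a b))"
| bangL: "bng \<Longrightarrow> rl cyc bng R [(fill u (Fm a), d)] (fill u (Fm (Bang a)), d)"
| bangR: "bng \<Longrightarrow> is_k k \<Longrightarrow> rl cyc bng R [(k, Some a)] (k, Some (Bang a))"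
| kw: "bng \<Longrightarrow> is_k k \<Longrightarrow> rl cyc bng R [(fill u Emp, d)] (fill u k, d)"
| kc: "bng \<Longrightarrow> is_k k \<Longrightarrow> rl cyc bng R [(fill u (Comp k k), d)] (fill u k, d)"
| ke1: "bng \<Longrightarrow> is_k k \<Longrightarrow> rl cyc bng R [(fill u (Comp k y), d)] (fill u (Comp y k), d)"
| ke2: "bng \<Longrightarrow> is_k k \<Longrightarrow> rl cyc bng R [(fill u (Comp y k), d)] (fill u (Comp k y), d)"
| ka1a: "bng \<Longrightarrow> is_k k \<Longrightarrow>
     rl cyc bng R [(fill u (Comp (Comp k y) z), d)] (fill u (Comp k (Comp y z)), d)"
| ka1b: "bng \<Longrightarrow> is_k k \<Longrightarrow>
     rl cyc bng R [(fill u (Comp k (Comp y z)), d)] (fill u (Comp (Comp k y) z), d)"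
| ka2a: "bng \<Longrightarrow> is_k k \<Longrightarrow>
     rl cyc bng R [(fill u (Comp (Comp x y) k), d)] (fill u (Comp x (Comp y k)), d)"
| ka2b: "bng \<Longrightarrow> is_k k \<Longrightarrow>
     rl cyc bng R [(fill u (Comp x (Comp y k)), d)] (fill u (Comp (Comp x y) k), d)"
| e: "SE \<in> R \<Longrightarrow> rl cyc bng R [(fill u (Comp x y), d)] (fill u (Comp y x), d)"
| c: "SC \<in> R \<Longrightarrow> rl cyc bng R [(fill u (Comp x x), d)] (fill u x, d)"
| i: "SW \<in> R \<Longrightarrow> rl cyc bng R [(fill u Emp, d)] (fill u x, d)"
| o: "SW \<in> R \<Longrightarrow> rl cyc bng R [(x, None)] (x, Some a)"

(* When bng = False (InFNL / CyInFNL) every sequent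
   occurring in the derivation must be !-free.  Sequents are identified modulo
   the unit laws of the free unital groupoid (rule conv). *)
inductive der :: "bool \<Rightarrow> bool \<Rightarrow> sr set \<Rightarrow> seq set \<Rightarrow> seq \<Rightarrow> bool"
  for cyc :: bool and bng :: bool and R :: "sr set" and S :: "seq set" where
  leaf: "s \<in> S \<Longrightarrow> (bng \<or> L0_seq s) \<Longrightarrow> der cyc bng R S s"
| step: "rl cyc bng R ps s \<Longrightarrow> (\<forall>p\<in>set ps. der cyc bng R S p) \<Longrightarrow> (bng \<or> L0_seq s)
         \<Longrightarrow> der cyc bng R S s"
| conv: "der cyc bng R S s \<Longrightarrow> seq_norm s = seq_norm s' \<Longrightarrow> der cyc bng R S s'"

abbreviation NACCLLm_R where "NACCLLm_R R S s \<equiv> der False True R S s"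
abbreviation InFNL_R where "InFNL_R R S s \<equiv> der False False R S s"
abbreviation NACCLL_R where "NACCLL_R R S s \<equiv> der True True R S s"
abbreviation CyInFNL_R where "CyInFNL_R R S s \<equiv> der True False R S s"

end

theory Submission
  imports Defs
begin


lemma st_bf_snorm: "st_bangfree (snorm x) = st_bangfree x"
  by (induction x) (auto simp: Let_def)

lemma der_L0: "der cyc False R S s \<Longrightarrow> L0_seq s"
proof (induction rule: der.induct)
  case (conv s s')
  then show ?case
    by (metis L0_seq_def prod.inject seq_norm_def st_bf_snorm surjective_pairing)
qed auto

lemma fill_bf: "st_bangfree (fill u x) \<Longrightarrow> st_bangfree y \<Longrightarrow> st_bangfree (fill u y)"
  by (induction u) auto

lemma fill_bf2: "st_bangfree (fill u x) \<Longrightarrow> st_bangfree x"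
  by (induction u) auto

context fixes cyc :: bool and R :: "sr set" and S :: "seq set"
begin

abbreviation DD where "DD s \<equiv> der cyc False R S s"

lemma DL0: "DD (x, d) \<Longrightarrow> st_bangfree x \<and> (case d of None \<Rightarrow> True | Some a \<Rightarrow> bangfree a)"
  using der_L0[of cyc R S "(x,d)"] by (simp add: L0_seq_def)

lemma DL0F: "DD (Fm a, Some b) \<Longrightarrow> bangfree a \<and> bangfree b"
  using DL0 by fastforce

lemma stp: "rl cyc False R ps s \<Longrightarrow> (\<forall>p\<in>set ps. DD p) \<Longrightarrow> L0_seq s \<Longrightarrow> DD s"
  by (rule der.step) auto

lemma L0F: "L0_seq (Fm a, Some b) = (bangfree a \<and> bangfree b)"
  by (simp add: L0_seq_def)

lemma Lax: "bangfree a \<Longrightarrow> DD (Fm a, Some a)"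
  by (rule stp[OF rl.ax]) (auto simp: L0_seq_def)

lemma Lcut: "DD (x, Some a) \<Longrightarrow> DD (fill u (Fm a), d) \<Longrightarrow> L0_seq (fill u x, d) \<Longrightarrow> DD (fill u x, d)"
  by (rule stp[OF rl.cut]) auto

lemma Lcut0: "DD (x, Some a) \<Longrightarrow> DD (Fm a, d) \<Longrightarrow> L0_seq (x, d) \<Longrightarrow> DD (x, d)"
  using Lcut[of x a Hole d] by simp

lemma Ltrans: "DD (Fm a, Some b) \<Longrightarrow> DD (Fm b, Some c) \<Longrightarrow> DD (Fm a, Some c)"
  apply (rule Lcut0, assumption+)
  using DL0F by (fastforce simp: L0_seq_def)

lemma Lmeet1: "bangfree a \<Longrightarrow> bangfree b \<Longrightarrow> DD (Fm (Meet a b), Some a)"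
  using stp[OF rl.meetL1[of cyc False R Hole a _ b]] Lax by (auto simp: L0_seq_def)
lemma Lmeet2: "bangfree a \<Longrightarrow> bangfree b \<Longrightarrow> DD (Fm (Meet a b), Some b)"
  using stp[OF rl.meetL2[of cyc False R Hole b _ a]] Lax by (auto simp: L0_seq_def)
lemma LmeetI: "DD (Fm c, Some a) \<Longrightarrow> DD (Fm c, Some b) \<Longrightarrow> DD (Fm c, Some (Meet a b))"
  apply (rule stp[OF rl.meetR]) using DL0F by (auto simp: L0_seq_def)
lemma Ljoin1: "bangfree a \<Longrightarrow> bangfree b \<Longrightarrow> DD (Fm a, Some (Join a b))"
  using stp[OF rl.joinR1] Lax by (auto simp: L0_seq_def)
lemma Ljoin2: "bangfree a \<Longrightarrow> bangfree b \<Longrightarrow> DD (Fm b, Some (Join a b))"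
  using stp[OF rl.joinR2] Lax by (auto simp: L0_seq_def)
lemma LjoinE: "DD (Fm a, Some c) \<Longrightarrow> DD (Fm b, Some c) \<Longrightarrow> DD (Fm (Join a b), Some c)"
  using stp[OF rl.joinL[of cyc False R Hole a _ b]] DL0F[of a c] DL0F[of b c] by (auto simp: L0_seq_def)

lemma Lprod: "bangfree a \<Longrightarrow> bangfree b \<Longrightarrow> DD (Comp (Fm a) (Fm b), Some (Prod a b))"
  using stp[OF rl.prodR] Lax by (auto simp: L0_seq_def)

lemma LprodL: "DD (Comp (Fm a) (Fm b), d) \<Longrightarrow> DD (Fm (Prod a b), d)"
  using stp[OF rl.prodL[of cyc False R Hole a b]] DL0[of "Comp (Fm a) (Fm b)" d] by (auto simp: L0_seq_def)

lemma LprodE: "DD (Fm (Prod a b), Some c) \<Longrightarrow> DD (Comp (Fm a) (Fm b), Some c)"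
  apply (rule Lcut0[OF Lprod]) using DL0F[of "Prod a b" c] by (auto simp: L0_seq_def)

lemma Lres1: "DD (Fm (Prod x y), Some z) \<Longrightarrow> DD (Fm y, Some (LDiv x z))"
  using stp[OF rl.ldivR] LprodE DL0F by (fastforce simp: L0_seq_def)
lemma Lres2: "DD (Fm (Prod x y), Some z) \<Longrightarrow> DD (Fm x, Some (RDiv z y))"
  using stp[OF rl.rdivR] LprodE DL0F by (fastforce simp: L0_seq_def)

lemma Lres1': assumes "bangfree x" "DD (Fm y, Some (LDiv x z))" shows "DD (Fm (Prod x y), Some z)"
proof -
  have bz: "bangfree z" "bangfree y" using DL0F[OF assms(2)] by (auto simp: L0_seq_def)
  have "DD (Comp (Fm x) (Fm (LDiv x z)), Some z)"
    using stp[OF rl.ldivL[of cyc False R "Fm x" x Hole z]] Lax assms bz by (auto simp: L0_seq_def)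
  then have "DD (Comp (Fm x) (Fm y), Some z)"
    using Lcut[of "Fm y" "LDiv x z" "CR (Fm x) Hole"] assms bz by (auto simp: L0_seq_def)
  then show ?thesis by (rule LprodL)
qed

lemma Lres2': assumes "bangfree y" "DD (Fm x, Some (RDiv z y))" shows "DD (Fm (Prod x y), Some z)"
proof -
  have bz: "bangfree z" "bangfree x" using DL0F[OF assms(2)] by (auto simp: L0_seq_def)
  have "DD (Comp (Fm (RDiv z y)) (Fm y), Some z)"
    using stp[OF rl.rdivL[of cyc False R "Fm y" y Hole z]] Lax assms bz by (auto simp: L0_seq_def)
  then have "DD (Comp (Fm x) (Fm y), Some z)"
    using Lcut[of "Fm x" "RDiv z y" "CL Hole (Fm y)"] assms bz by (auto simp: L0_seq_def)
  then show ?thesis by (rule LprodL)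
qed

lemma Lconv: "DD s \<Longrightarrow> seq_norm s = seq_norm s' \<Longrightarrow> DD s'"
  by (rule der.conv)

lemma Lu1: "bangfree x \<Longrightarrow> DD (Fm (Prod One x), Some x)"
proof -
  assume b: "bangfree x"
  have "DD (Comp Emp (Fm x), Some x)" using Lconv[OF Lax[OF b]] by (simp add: seq_norm_def)
  then have "DD (Comp (Fm One) (Fm x), Some x)"
    using stp[OF rl.oneL[of cyc False R "CL Hole (Fm x)"]] b by (auto simp: L0_seq_def)
  then show ?thesis by (rule LprodL)
qed
lemma Lu3: "bangfree x \<Longrightarrow> DD (Fm (Prod x One), Some x)"
proof -
  assume b: "bangfree x"
  have "DD (Comp (Fm x) Emp, Some x)" using Lconv[OF Lax[OF b]] by (simp add: seq_norm_def)
  then have "DD (Comp (Fm x) (Fm One), Some x)"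
    using stp[OF rl.oneL[of cyc False R "CR (Fm x) Hole"]] b by (auto simp: L0_seq_def)
  then show ?thesis by (rule LprodL)
qed
lemma Lone: "DD (Emp, Some One)"
  by (rule stp[OF rl.one_ax]) (auto simp: L0_seq_def)
lemma Lu2: "bangfree x \<Longrightarrow> DD (Fm x, Some (Prod One x))"
  using Lconv[OF stp[OF rl.prodR[of cyc False R Emp One "Fm x" x]]] Lone Lax
  by (auto simp: L0_seq_def seq_norm_def)
lemma Lu4: "bangfree x \<Longrightarrow> DD (Fm x, Some (Prod x One))"
  using Lconv[OF stp[OF rl.prodR[of cyc False R "Fm x" x Emp One]]] Lone Lax
  by (auto simp: L0_seq_def seq_norm_def)

lemma Li1: "bangfree a \<Longrightarrow> DD (Fm (LDiv (RDiv Zero a) Zero), Some a)"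
  using stp[OF rl.inv1[of cyc False R a]] by (auto simp: L0_seq_def neg_l_def neg_r_def)
lemma Li2: "bangfree a \<Longrightarrow> DD (Fm (RDiv Zero (LDiv a Zero)), Some a)"
  using stp[OF rl.inv2[of cyc False R a]] by (auto simp: L0_seq_def neg_l_def neg_r_def)
lemma Li3: "bangfree a \<Longrightarrow> bangfree b \<Longrightarrow> DD (Fm (RDiv (LDiv a Zero) b), Some (LDiv a (RDiv Zero b)))"
  using stp[OF rl.inv3[of cyc False R a b]] by (auto simp: L0_seq_def neg_l_def neg_r_def)
lemma Li4: "bangfree a \<Longrightarrow> bangfree b \<Longrightarrow> DD (Fm (LDiv a (RDiv Zero b)), Some (RDiv (LDiv a Zero) b))"
  using stp[OF rl.inv4[of cyc False R a b]] by (auto simp: L0_seq_def neg_l_def neg_r_def)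
lemma Lc1: "cyc \<Longrightarrow> bangfree a \<Longrightarrow> DD (Fm (LDiv a Zero), Some (RDiv Zero a))"
  using stp[OF rl.cy1[of cyc False R a]] by (auto simp: L0_seq_def neg_l_def neg_r_def)
lemma Lc2: "cyc \<Longrightarrow> bangfree a \<Longrightarrow> DD (Fm (RDiv Zero a), Some (LDiv a Zero))"
  using stp[OF rl.cy2[of cyc False R a]] by (auto simp: L0_seq_def neg_l_def neg_r_def)

lemma LsE: "SE \<in> R \<Longrightarrow> bangfree a \<Longrightarrow> bangfree b \<Longrightarrow> DD (Fm (Prod a b), Some (Prod b a))"
  using stp[OF rl.e[of R cyc False Hole "Fm b" "Fm a"]] Lprod[of b a]
  by (auto simp: L0_seq_def intro!: LprodL)
lemma LsC: "SC \<in> R \<Longrightarrow> bangfree a \<Longrightarrow> DD (Fm a, Some (Prod a a))"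
  using stp[OF rl.c[of R cyc False Hole "Fm a"]] Lprod[of a a]
  by (auto simp: L0_seq_def)
lemma LsW1: "SW \<in> R \<Longrightarrow> bangfree a \<Longrightarrow> DD (Fm a, Some One)"
  using stp[OF rl.i[of R cyc False Hole _ "Fm a"]] Lone
  by (auto simp: L0_seq_def)
lemma Lzero: "DD (Fm Zero, None)"
  by (rule stp[OF rl.zero_ax]) (auto simp: L0_seq_def)
lemma LsW2: "SW \<in> R \<Longrightarrow> bangfree a \<Longrightarrow> DD (Fm Zero, Some a)"
  using stp[OF rl.o[of R cyc False "Fm Zero"]] Lzero
  by (auto simp: L0_seq_def)

end

fun sf :: "st \<Rightarrow> fm" where
  "sf (Fm a) = a" | "sf Emp = One" | "sf (Comp x y) = Prod (sf x) (sf y)"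

fun od :: "fm option \<Rightarrow> fm" where
  "od None = Zero" | "od (Some a) = a"

fun cc :: "ctx \<Rightarrow> ctx \<Rightarrow> ctx" where
  "cc Hole v = v" | "cc (CL u y) v = CL (cc u v) y" | "cc (CR y u) v = CR y (cc u v)"

lemma fill_cc: "fill (cc u v) x = fill u (fill v x)"
  by (induction u) auto

lemma bf_sf: "st_bangfree x \<Longrightarrow> bangfree (sf x)"
  by (induction x) auto

context fixes cyc :: bool and R :: "sr set" and S :: "seq set"
begin

lemma Lsf: "st_bangfree x \<Longrightarrow> DD cyc R S (x, Some (sf x))"
proof (induction x)
  case (Fm a) then show ?case using Lax by simp
next
  case (Comp x y) then show ?case
    using stp[OF rl.prodR[of cyc False R x "sf x" y "sf y"]] bf_sf by (auto simp: L0_seq_def)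
qed (simp add: Lone)

lemma Lback: "DD cyc R S (Fm (sf x), Some (od d)) \<Longrightarrow> st_bangfree x \<Longrightarrow> DD cyc R S (x, d)"
proof (cases d)
  case None
  assume a: "DD cyc R S (Fm (sf x), Some (od d))" "st_bangfree x"
  have "DD cyc R S (x, Some Zero)" using Lcut0[OF Lsf a(1)] a None by (auto simp: L0_seq_def)
  then show ?thesis using Lcut0[OF _ Lzero] a None by (auto simp: L0_seq_def)
next
  case (Some b)
  assume a: "DD cyc R S (Fm (sf x), Some (od d))" "st_bangfree x"
  then show ?thesis using Lcut0[OF Lsf a(1)] a Some DL0F by (auto simp: L0_seq_def)
qed

lemma Lleft: "st_bangfree x \<Longrightarrow> DD cyc R S (fill u x, d) \<Longrightarrow> DD cyc R S (fill u (Fm (sf x)), d)"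
proof (induction x arbitrary: u)
  case Emp
  then show ?case using stp[OF rl.oneL[of cyc False R u d]] DL0[of cyc R S "fill u Emp" d] fill_bf
    by (auto simp: L0_seq_def)
next
  case (Comp x y)
  have "DD cyc R S (fill (cc u (CL Hole y)) (Fm (sf x)), d)"
    using Comp.IH(1)[of "cc u (CL Hole y)"] Comp.prems by (simp add: fill_cc)
  then have "DD cyc R S (fill (cc u (CR (Fm (sf x)) Hole)) (Fm (sf y)), d)"
    using Comp.IH(2)[of "cc u (CR (Fm (sf x)) Hole)"] Comp.prems by (simp add: fill_cc)
  then have h: "DD cyc R S (fill u (Comp (Fm (sf x)) (Fm (sf y))), d)" by (simp add: fill_cc)
  show ?case
    using stp[OF rl.prodL[of cyc False R u "sf x" "sf y" d]] h DL0[of cyc R S "fill u (Comp (Fm (sf x)) (Fm (sf y)))" d] fill_bf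
    bf_sf Comp.prems by (auto simp: L0_seq_def)
qed simp

lemma Lfwd: "DD cyc R S (x, d) \<Longrightarrow> DD cyc R S (Fm (sf x), Some (od d))"
proof -
  assume a: "DD cyc R S (x, d)"
  have b: "DD cyc R S (x, Some (od d))"
  proof (cases d)
    case None then show ?thesis using stp[OF rl.zeroR[of cyc False R x]] a DL0 by (auto simp: L0_seq_def)
  qed (use a in simp)
  show ?thesis using Lleft[of x Hole] b DL0[OF a] by simp
qed

end


locale alg =
  fixes le :: "'a \<Rightarrow> 'a \<Rightarrow> bool" and mt jn ml ld rd :: "'a \<Rightarrow> 'a \<Rightarrow> 'a"
    and on zr bt :: 'a and cyc :: bool and R :: "sr set"
  assumes refl: "le x x" and trans: "le x y \<Longrightarrow> le y z \<Longrightarrow> le x z"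
  and mt1: "le (mt x y) x" and mt2: "le (mt x y) y" and mtI: "le z x \<Longrightarrow> le z y \<Longrightarrow> le z (mt x y)"
  and jn1: "le x (jn x y)" and jn2: "le y (jn x y)" and jnE: "le x z \<Longrightarrow> le y z \<Longrightarrow> le (jn x y) z"
  and res1: "le (ml x y) z \<longleftrightarrow> le y (ld x z)" and res2: "le (ml x y) z \<longleftrightarrow> le x (rd z y)"
  and u1: "le (ml on x) x" and u2: "le x (ml on x)" and u3: "le (ml x on) x" and u4: "le x (ml x on)"
  and i1: "le (ld (rd zr a) zr) a" and i2: "le (rd zr (ld a zr)) a"
  and i3: "le (rd (ld a zr) b) (ld a (rd zr b))" and i4: "le (ld a (rd zr b)) (rd (ld a zr) b)"
  and c1: "cyc \<Longrightarrow> le (ld a zr) (rd zr a)" and c2: "cyc \<Longrightarrow> le (rd zr a) (ld a zr)"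
  and bot: "le bt x"
  and sE: "SE \<in> R \<Longrightarrow> le (ml x y) (ml y x)" and sC: "SC \<in> R \<Longrightarrow> le x (ml x x)"
  and sW1: "SW \<in> R \<Longrightarrow> le x on" and sW2: "SW \<in> R \<Longrightarrow> le zr x"
begin

lemma mono: "le x x' \<Longrightarrow> le y y' \<Longrightarrow> le (ml x y) (ml x' y')"
proof -
  assume a: "le x x'" "le y y'"
  have "le y' (ld x' (ml x' y'))" using res1 refl by blast
  then have "le (ml x' y) (ml x' y')" using res1 trans a(2) by blast
  then have "le x' (rd (ml x' y') y)" using res2 by blast
  then show ?thesis using res2 trans a(1) by blast
qed

lemma botl: "le k bt \<Longrightarrow> le (ml k y) bt"
  using res2 bot trans by blast
lemma botr: "le k bt \<Longrightarrow> le (ml y k) bt"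
  using res1 bot trans by blast

fun ev :: "(nat \<Rightarrow> 'a) \<Rightarrow> fm \<Rightarrow> 'a" where
  "ev V (Var n) = V n"
| "ev V (Meet a b) = mt (ev V a) (ev V b)"
| "ev V (Join a b) = jn (ev V a) (ev V b)"
| "ev V (Prod a b) = ml (ev V a) (ev V b)"
| "ev V (LDiv a b) = ld (ev V a) (ev V b)"
| "ev V (RDiv a b) = rd (ev V a) (ev V b)"
| "ev V (Bang a) = (if le on (ev V a) then on else bt)"
| "ev V One = on"
| "ev V Zero = zr"

fun evs :: "(nat \<Rightarrow> 'a) \<Rightarrow> st \<Rightarrow> 'a" where
  "evs V (Fm a) = ev V a" | "evs V Emp = on" | "evs V (Comp x y) = ml (evs V x) (evs V y)"

fun evc :: "(nat \<Rightarrow> 'a) \<Rightarrow> ctx \<Rightarrow> 'a \<Rightarrow> 'a" where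
  "evc V Hole e = e"
| "evc V (CL u y) e = ml (evc V u e) (evs V y)"
| "evc V (CR y u) e = ml (evs V y) (evc V u e)"

fun evo :: "(nat \<Rightarrow> 'a) \<Rightarrow> fm option \<Rightarrow> 'a" where
  "evo V None = zr" | "evo V (Some a) = ev V a"

definition valid :: "(nat \<Rightarrow> 'a) \<Rightarrow> seq \<Rightarrow> bool" where
  "valid V s = le (evs V (fst s)) (evo V (snd s))"

lemma evs_fill: "evs V (fill u x) = evc V u (evs V x)"
  by (induction u) auto

lemma evc_mono: "le e e' \<Longrightarrow> le (evc V u e) (evc V u e')"
  by (induction u) (auto intro: mono refl)

lemma ctx_step: "le e e' \<Longrightarrow> le (evc V u e') d \<Longrightarrow> le (evc V u e) d"
  using evc_mono trans by blast

lemma evc_join: "le (evc V u a) d \<Longrightarrow> le (evc V u b) d \<Longrightarrow> le (evc V u (jn a b)) d"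
proof (induction u arbitrary: d)
  case Hole then show ?case by (simp add: jnE)
next
  case (CL u y) then show ?case using res2 by simp
next
  case (CR y u) then show ?case using res1 by simp
qed

lemma evs_snorm: "le (evs V (snorm x)) (evs V x) \<and> le (evs V x) (evs V (snorm x))"
proof (induction x)
  case (Comp x y)
  let ?x = "snorm x" and ?y = "snorm y"
  have m: "le (ml (evs V ?x) (evs V ?y)) (ml (evs V x) (evs V y))"
       "le (ml (evs V x) (evs V y)) (ml (evs V ?x) (evs V ?y))"
    using Comp mono by auto
  show ?case
  proof (cases "?x = Emp")
    case True
    then have e: "evs V ?x = on" by simp
    have "le (evs V ?y) (ml (evs V x) (evs V y))" using trans[OF u2 m(1)[unfolded e]] .
    moreover have "le (ml (evs V x) (evs V y)) (evs V ?y)" using trans[OF m(2)[unfolded e] u1] .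
    ultimately show ?thesis using True by (simp add: Let_def)
  next
    case False
    show ?thesis
    proof (cases "?y = Emp")
      case True
      then have e: "evs V ?y = on" by simp
      have "le (evs V ?x) (ml (evs V x) (evs V y))" using trans[OF u4 m(1)[unfolded e]] .
      moreover have "le (ml (evs V x) (evs V y)) (evs V ?x)" using trans[OF m(2)[unfolded e] u3] .
      ultimately show ?thesis using True False by (simp add: Let_def)
    qed (use m False in \<open>simp add: Let_def\<close>)
  qed
qed (auto simp: refl)

lemma kval: "is_k k \<Longrightarrow> (le (evs V k) on \<and> le on (evs V k)) \<or> le (evs V k) bt"
proof (induction k)
  case (Fm a)
  then show ?case by (cases a) (auto simp: refl)
next
  case (Comp x y)
  then have h: "(le (evs V x) on \<and> le on (evs V x)) \<or> le (evs V x) bt"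
     "(le (evs V y) on \<and> le on (evs V y)) \<or> le (evs V y) bt" by auto
  have c1: ?case if a: "le (evs V x) on" "le on (evs V x)" "le (evs V y) on" "le on (evs V y)"
  proof -
    have "le (ml (evs V x) (evs V y)) (ml on on)" "le (ml on on) (ml (evs V x) (evs V y))"
      using a mono by auto
    then have "le (ml (evs V x) (evs V y)) on" "le on (ml (evs V x) (evs V y))"
      using trans[OF _ u1] trans[OF u2] by blast+
    then show ?thesis by simp
  qed
  have c2: ?case if "le (evs V y) bt" using botr[OF that, of "evs V x"] by simp
  have c3: ?case if "le (evs V x) bt" using botl[OF that, of "evs V y"] by simp
  show ?case using h c1 c2 c3 by blast
qed (auto simp: refl)

lemma k_le_on: "is_k k \<Longrightarrow> le (evs V k) on"
  using kval bot trans by blast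


lemma k_cases:
  assumes "is_k k"
  and "le (evs V k) on \<Longrightarrow> le on (evs V k) \<Longrightarrow> P"
  and "le (evs V k) bt \<Longrightarrow> P"
  shows P using kval[OF assms(1), of V] assms(2,3) by blast

lemma k_contr: assumes "is_k k" shows "le (evs V k) (ml (evs V k) (evs V k))"
proof (rule k_cases[OF assms, of V])
  assume a: "le (evs V k) on" "le on (evs V k)"
  have "le on (ml on on)" by (rule u2)
  moreover have "le (ml on on) (ml (evs V k) (evs V k))" using a mono by auto
  ultimately show ?thesis using a trans by blast
next
  assume "le (evs V k) bt" then show ?thesis using bot trans by blast
qed

lemma onl: "le k on \<Longrightarrow> le on k \<Longrightarrow> le (ml k y) y \<and> le y (ml k y)"
  using mono[of k on y y] mono[of on k y y] u1 u2 refl trans by metis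
lemma onr: "le k on \<Longrightarrow> le on k \<Longrightarrow> le (ml y k) y \<and> le y (ml y k)"
  using mono[of y y k on] mono[of y y on k] u3 u4 refl trans by metis

lemma k_exch: "is_k k \<Longrightarrow> le (ml y (evs V k)) (ml (evs V k) y)"
  apply (erule k_cases[of k V])
  using onl onr trans apply blast
  using botr bot trans by blast

lemma k_exch2: "is_k k \<Longrightarrow> le (ml (evs V k) y) (ml y (evs V k))"
  apply (erule k_cases[of k V])
  using onl onr trans apply blast
  using botl bot trans by blast

lemma k_as1: "is_k k \<Longrightarrow> le (ml (ml (evs V k) y) z) (ml (evs V k) (ml y z))
                          \<and> le (ml (evs V k) (ml y z)) (ml (ml (evs V k) y) z)"
  apply (erule k_cases[of k V])
  subgoal premises p
  proof -
    have "le (ml (ml (evs V k) y) z) (ml y z)" "le (ml y z) (ml (ml (evs V k) y) z)"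
      using onl[OF p] mono refl by blast+
    then show ?thesis using onl[OF p] trans by blast
  qed
  using botl bot trans by blast

lemma k_as2: "is_k k \<Longrightarrow> le (ml (ml x y) (evs V k)) (ml x (ml y (evs V k)))
                          \<and> le (ml x (ml y (evs V k))) (ml (ml x y) (evs V k))"
  apply (erule k_cases[of k V])
  subgoal premises p
  proof -
    have "le (ml x (ml y (evs V k))) (ml x y)" "le (ml x y) (ml x (ml y (evs V k)))"
      using onr[OF p] mono refl by blast+
    then show ?thesis using onr[OF p] trans by blast
  qed
  using botr bot trans by blast

lemma rl_sound: "rl cyc bng R ps s \<Longrightarrow> \<forall>p\<in>set ps. valid V p \<Longrightarrow> valid V s"
proof (induction rule: rl.induct)
  case (cut x a u d)
  then show ?case unfolding valid_def using evc_mono trans by (simp add: evs_fill; blast)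
next
  case (ldivL x a u b d)
  have a: "le (evs V x) (ev V a)" using ldivL by (simp add: valid_def)
  have "le (ml (evs V x) (ld (ev V a) (ev V b))) (ml (ev V a) (ld (ev V a) (ev V b)))"
    using mono[OF a refl] .
  moreover have "le (ml (ev V a) (ld (ev V a) (ev V b))) (ev V b)" using res1 refl by blast
  ultimately have "le (ml (evs V x) (ld (ev V a) (ev V b))) (ev V b)" using trans by blast
  then show ?case using ldivL evc_mono trans unfolding valid_def by (simp add: evs_fill; blast)
next
  case (rdivL x a u b d)
  have a: "le (evs V x) (ev V a)" using rdivL by (simp add: valid_def)
  have "le (ml (rd (ev V b) (ev V a)) (evs V x)) (ml (rd (ev V b) (ev V a)) (ev V a))"
    using mono[OF refl a] .
  moreover have "le (ml (rd (ev V b) (ev V a)) (ev V a)) (ev V b)" using res2 refl by blast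
  ultimately have "le (ml (rd (ev V b) (ev V a)) (evs V x)) (ev V b)" using trans by blast
  then show ?case using rdivL evc_mono trans unfolding valid_def by (simp add: evs_fill; blast)
next
  case (ldivR a x b) then show ?case using res1 by (simp add: valid_def)
next
  case (rdivR x a b) then show ?case using res2 by (simp add: valid_def)
next
  case (prodR x a y b) then show ?case using mono by (simp add: valid_def)
next
  case (meetL1 u a d b) then show ?case by (simp add: valid_def evs_fill) (erule ctx_step[OF mt1])
next
  case (meetL2 u b d a) then show ?case by (simp add: valid_def evs_fill) (erule ctx_step[OF mt2])
next
  case (meetR x a b) then show ?case using mtI by (simp add: valid_def)
next
  case (joinL u a d b) then show ?case using evc_join by (simp add: valid_def evs_fill)
next
  case (joinR1 x a b) then show ?case using jn1 trans by (simp add: valid_def; blast)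
next
  case (joinR2 x b a) then show ?case using jn2 trans by (simp add: valid_def; blast)
next
  case (bangL u a d)
  have "le (ev V (Bang a)) (ev V a)" using refl bot by simp
  then show ?case using bangL ctx_step by (simp add: valid_def evs_fill)
next
  case (bangR k a)
  then have a: "le (evs V k) (ev V a)" by (simp add: valid_def)
  show ?case
  proof (rule k_cases[OF bangR(2), of V])
    assume b: "le (evs V k) on" "le on (evs V k)"
    have "le on (ev V a)" using trans[OF b(2) a] .
    then show ?thesis using b(1) by (simp add: valid_def)
  next
    assume b: "le (evs V k) bt"
    have "le (evs V k) on" "le (evs V k) bt" using trans[OF b bot] b by auto
    then show ?thesis by (simp add: valid_def)
  qed
next
  case (kw k u d)
  then show ?case by (simp add: valid_def evs_fill) (erule ctx_step[OF k_le_on[OF kw(2)]])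
next
  case (kc k u d)
  then show ?case by (simp add: valid_def evs_fill) (erule ctx_step[OF k_contr[OF kc(2)]])
next
  case (ke1 k u y d)
  then show ?case by (simp add: valid_def evs_fill) (erule ctx_step[OF k_exch[OF ke1(2)]])
next
  case (ke2 k u y d)
  then show ?case by (simp add: valid_def evs_fill) (erule ctx_step[OF k_exch2[OF ke2(2)]])
next
  case (ka1a k u y z d)
  then show ?case by (simp add: valid_def evs_fill) (erule ctx_step[OF conjunct2[OF k_as1[OF ka1a(2)]]])
next
  case (ka1b k u y z d)
  then show ?case by (simp add: valid_def evs_fill) (erule ctx_step[OF conjunct1[OF k_as1[OF ka1b(2)]]])
next
  case (ka2a k u x y d)
  then show ?case by (simp add: valid_def evs_fill) (erule ctx_step[OF conjunct2[OF k_as2[OF ka2a(2)]]])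
next
  case (ka2b k u x y d)
  then show ?case by (simp add: valid_def evs_fill) (erule ctx_step[OF conjunct1[OF k_as2[OF ka2b(2)]]])
next
  case (e u x y d)
  then show ?case by (simp add: valid_def evs_fill) (erule ctx_step[OF sE[OF e(1)]])
next
  case (c u x d)
  then show ?case by (simp add: valid_def evs_fill) (erule ctx_step[OF sC[OF c(1)]])
next
  case (i u d x)
  then show ?case by (simp add: valid_def evs_fill) (erule ctx_step[OF sW1[OF i(1)]])
next
  case (o x a)
  then show ?case using trans[OF _ sW2[OF o(1)]] by (simp add: valid_def)
qed (auto simp: valid_def neg_l_def neg_r_def refl i1 i2 i3 i4 c1 c2 evs_fill)

lemma sound: "der cyc bng R S s \<Longrightarrow> \<forall>t\<in>S. valid V t \<Longrightarrow> valid V s"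
proof (induction rule: der.induct)
  case (step ps s) then show ?case using rl_sound by blast
next
  case (conv s s')
  obtain x d where s: "s = (x, d)" by fastforce
  obtain x' d' where s': "s' = (x', d')" by fastforce
  have "snorm x = snorm x'" "d = d'" using conv(2) s s' by (auto simp: seq_norm_def)
  then show ?case using conv evs_snorm[of V x] evs_snorm[of V x'] s s' trans unfolding valid_def
    by simp metis
qed auto

end


fun bf :: "fm \<Rightarrow> fm" where
  "bf (Var n) = Var n"
| "bf (Meet a b) = Meet (bf a) (bf b)"
| "bf (Join a b) = Join (bf a) (bf b)"
| "bf (Prod a b) = Prod (bf a) (bf b)"
| "bf (LDiv a b) = LDiv (bf a) (bf b)"
| "bf (RDiv a b) = RDiv (bf a) (bf b)"
| "bf (Bang a) = One"
| "bf One = One"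
| "bf Zero = Zero"

lemma bf_bf[simp]: "bangfree (bf a)"
  by (induction a) auto
lemma bf_id: "bangfree a \<Longrightarrow> bf a = a"
  by (induction a) auto

context fixes cyc :: bool and R :: "sr set" and S :: "seq set"
begin

definition E :: "fm \<Rightarrow> fm \<Rightarrow> bool" where "E a b = DD cyc R S (Fm (bf a), Some (bf b))"

lemma Erefl: "E a a" by (simp add: E_def Lax)
lemma Etrans: "E a b \<Longrightarrow> E b c \<Longrightarrow> E a c" unfolding E_def by (rule Ltrans)
lemma Emt1: "E (Meet a b) a" by (simp add: E_def Lmeet1)
lemma Emt2: "E (Meet a b) b" by (simp add: E_def Lmeet2)
lemma EmtI: "E c a \<Longrightarrow> E c b \<Longrightarrow> E c (Meet a b)" by (simp add: E_def LmeetI)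
lemma Ejn1: "E a (Join a b)" by (simp add: E_def Ljoin1)
lemma Ejn2: "E b (Join a b)" by (simp add: E_def Ljoin2)
lemma EjnE: "E a c \<Longrightarrow> E b c \<Longrightarrow> E (Join a b) c" by (simp add: E_def LjoinE)
lemma Eres1: "E (Prod x y) z \<longleftrightarrow> E y (LDiv x z)"
  unfolding E_def using Lres1 Lres1'[of "bf x"] by auto
lemma Eres2: "E (Prod x y) z \<longleftrightarrow> E x (RDiv z y)"
  unfolding E_def using Lres2 Lres2'[of "bf y"] by auto
lemma Eu1: "E (Prod One x) x" by (simp add: E_def Lu1)
lemma Eu2: "E x (Prod One x)" by (simp add: E_def Lu2)
lemma Eu3: "E (Prod x One) x" by (simp add: E_def Lu3)
lemma Eu4: "E x (Prod x One)" by (simp add: E_def Lu4)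
lemma Ei1: "E (LDiv (RDiv Zero a) Zero) a" by (simp add: E_def Li1)
lemma Ei2: "E (RDiv Zero (LDiv a Zero)) a" by (simp add: E_def Li2)
lemma Ei3: "E (RDiv (LDiv a Zero) b) (LDiv a (RDiv Zero b))" by (simp add: E_def Li3)
lemma Ei4: "E (LDiv a (RDiv Zero b)) (RDiv (LDiv a Zero) b)" by (simp add: E_def Li4)
lemma Ec1: "cyc \<Longrightarrow> E (LDiv a Zero) (RDiv Zero a)" unfolding E_def bf.simps by (rule Lc1) simp_all
lemma Ec2: "cyc \<Longrightarrow> E (RDiv Zero a) (LDiv a Zero)" unfolding E_def bf.simps by (rule Lc2) simp_all
lemma EsE: "SE \<in> R \<Longrightarrow> E (Prod x y) (Prod y x)" by (simp add: E_def LsE)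
lemma EsC: "SC \<in> R \<Longrightarrow> E x (Prod x x)" by (simp add: E_def LsC)
lemma EsW1: "SW \<in> R \<Longrightarrow> E x One" by (simp add: E_def LsW1)
lemma EsW2: "SW \<in> R \<Longrightarrow> E Zero x" by (simp add: E_def LsW2)

end

lemma fm_alg: "SW \<in> R \<Longrightarrow> alg (E cyc R S) Meet Join Prod LDiv RDiv One Zero Zero cyc R"
  apply unfold_locales
  apply (rule Erefl, erule Etrans, assumption, rule Emt1, rule Emt2, erule EmtI, assumption,
    rule Ejn1, rule Ejn2, erule EjnE, assumption, rule Eres1, rule Eres2, rule Eu1, rule Eu2, rule Eu3, rule Eu4,
    rule Ei1, rule Ei2, rule Ei3, rule Ei4, erule Ec1, erule Ec2, erule EsW2, erule EsE, erule EsC, erule EsW1, erule EsW2)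
  done

datatype dom = Bot | Top | El fm

fun leD :: "bool \<Rightarrow> sr set \<Rightarrow> seq set \<Rightarrow> dom \<Rightarrow> dom \<Rightarrow> bool" where
  "leD c R S Bot y = True"
| "leD c R S x Top = True"
| "leD c R S Top y = False"
| "leD c R S (El a) Bot = False"
| "leD c R S (El a) (El b) = E c R S a b"

fun mtD where
  "mtD Bot y = Bot" | "mtD x Bot = Bot" | "mtD Top y = y" | "mtD x Top = x"
| "mtD (El a) (El b) = El (Meet a b)"
fun jnD where
  "jnD Top y = Top" | "jnD x Top = Top" | "jnD Bot y = y" | "jnD x Bot = x"
| "jnD (El a) (El b) = El (Join a b)"
fun mlD where
  "mlD Bot y = Bot" | "mlD x Bot = Bot" | "mlD Top y = Top" | "mlD x Top = Top"
| "mlD (El a) (El b) = El (Prod a b)"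
fun ldD where
  "ldD Bot z = Top" | "ldD Top Top = Top" | "ldD Top z = Bot"
| "ldD (El a) Top = Top" | "ldD (El a) Bot = Bot" | "ldD (El a) (El c) = El (LDiv a c)"
fun rdD where
  "rdD z Bot = Top" | "rdD Top y = Top" | "rdD Bot y = Bot"
| "rdD (El c) Top = Bot" | "rdD (El c) (El b) = El (RDiv c b)"

lemma dom_alg: "SW \<notin> R \<Longrightarrow> alg (leD cyc R S) mtD jnD mlD ldD rdD (El One) (El Zero) Bot cyc R"
proof unfold_locales
  fix x y z :: dom
  show "leD cyc R S x x" by (cases x) (auto intro: Erefl)
  show "leD cyc R S x y \<Longrightarrow> leD cyc R S y z \<Longrightarrow> leD cyc R S x z"
    by (cases x; cases y; cases z) (auto intro: Etrans)
  show "leD cyc R S (mtD x y) x" by (cases x; cases y) (auto intro: Erefl Emt1)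
  show "leD cyc R S (mtD x y) y" by (cases x; cases y) (auto intro: Erefl Emt2)
  show "leD cyc R S z x \<Longrightarrow> leD cyc R S z y \<Longrightarrow> leD cyc R S z (mtD x y)"
    by (cases x; cases y; cases z) (auto intro: EmtI)
  show "leD cyc R S x (jnD x y)" by (cases x; cases y) (auto intro: Erefl Ejn1)
  show "leD cyc R S y (jnD x y)" by (cases x; cases y) (auto intro: Erefl Ejn2)
  show "leD cyc R S x z \<Longrightarrow> leD cyc R S y z \<Longrightarrow> leD cyc R S (jnD x y) z"
    by (cases x; cases y; cases z) (auto intro: EjnE)
  show "leD cyc R S (mlD x y) z = leD cyc R S y (ldD x z)"
    by (cases x; cases y; cases z) (auto simp: Eres1)
  show "leD cyc R S (mlD x y) z = leD cyc R S x (rdD z y)"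
    by (cases x; cases y; cases z) (auto simp: Eres2)
  show "leD cyc R S (mlD (El One) x) x" by (cases x) (auto intro: Eu1)
  show "leD cyc R S x (mlD (El One) x)" by (cases x) (auto intro: Eu2)
  show "leD cyc R S (mlD x (El One)) x" by (cases x) (auto intro: Eu3)
  show "leD cyc R S x (mlD x (El One))" by (cases x) (auto intro: Eu4)
  show "leD cyc R S (ldD (rdD (El Zero) x) (El Zero)) x" by (cases x) (auto intro: Ei1)
  show "leD cyc R S (rdD (El Zero) (ldD x (El Zero))) x" by (cases x) (auto intro: Ei2)
  show "leD cyc R S (rdD (ldD x (El Zero)) y) (ldD x (rdD (El Zero) y))"
    by (cases x; cases y) (auto intro: Ei3)
  show "leD cyc R S (ldD x (rdD (El Zero) y)) (rdD (ldD x (El Zero)) y)"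
    by (cases x; cases y) (auto intro: Ei4)
  show "cyc \<Longrightarrow> leD cyc R S (ldD x (El Zero)) (rdD (El Zero) x)" by (cases x) (auto intro: Ec1)
  show "cyc \<Longrightarrow> leD cyc R S (rdD (El Zero) x) (ldD x (El Zero))" by (cases x) (auto intro: Ec2)
  show "leD cyc R S Bot x" by simp
  show "SE \<in> R \<Longrightarrow> leD cyc R S (mlD x y) (mlD y x)" by (cases x; cases y) (auto intro: EsE)
  show "SC \<in> R \<Longrightarrow> leD cyc R S x (mlD x x)" by (cases x) (auto intro: EsC)
qed auto



lemma rl_mono: "rl cyc False R ps s \<Longrightarrow> rl cyc True R ps s"
  by (induction rule: rl.induct) (auto intro: rl.intros)

lemma der_mono: "der cyc False R S s \<Longrightarrow> der cyc True R S s"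
proof (induction rule: der.induct)
  case (leaf s) then show ?case by (auto intro: der.leaf)
next
  case (step ps s) then show ?case by (auto intro: der.step rl_mono)
next
  case (conv s s') then show ?case by (auto intro: der.conv)
qed

lemma od_bf: "(case d of None \<Rightarrow> True | Some a \<Rightarrow> bangfree a) \<Longrightarrow> bangfree (od d)"
  by (cases d) auto

lemma cons:
  assumes S: "\<forall>t\<in>S. L0_seq t" and s: "L0_seq s" and d: "der cyc True R S s"
  shows "der cyc False R S s"
proof (cases "SW \<in> R")
  case True
  interpret A: alg "E cyc R S" Meet Join Prod LDiv RDiv One Zero Zero cyc R using fm_alg[OF True] .
  have ev: "bangfree a \<Longrightarrow> A.ev Var a = a" for a by (induction a) auto
  have evs: "st_bangfree x \<Longrightarrow> A.evs Var x = sf x" for x by (induction x) (auto simp: ev)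
  have evo: "(case d of None \<Rightarrow> True | Some a \<Rightarrow> bangfree a) \<Longrightarrow> A.evo Var d = od d" for d
    by (cases d) (auto simp: ev)
  have val: "L0_seq t \<Longrightarrow> A.valid Var t \<longleftrightarrow> DD cyc R S (Fm (sf (fst t)), Some (od (snd t)))" for t
    by (auto simp: A.valid_def L0_seq_def evs evo E_def bf_id bf_sf od_bf)
  have "\<forall>t\<in>S. A.valid Var t"
  proof
    fix t assume t: "t \<in> S"
    obtain x dd where tt: "t = (x, dd)" by fastforce
    have "DD cyc R S t" using t S by (auto intro: der.leaf)
    then show "A.valid Var t" using val S t Lfwd tt by auto
  qed
  then have "A.valid Var s" using A.sound d by blast
  then have "DD cyc R S (Fm (sf (fst s)), Some (od (snd s)))" using val s by auto
  then show ?thesis using Lback[of cyc R S "fst s" "snd s"] s by (simp add: L0_seq_def)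
next
  case False
  interpret A: alg "leD cyc R S" mtD jnD mlD ldD rdD "El One" "El Zero" Bot cyc R using dom_alg[OF False] .
  have ev: "bangfree a \<Longrightarrow> A.ev (\<lambda>n. El (Var n)) a = El a" for a by (induction a) auto
  have evs: "st_bangfree x \<Longrightarrow> A.evs (\<lambda>n. El (Var n)) x = El (sf x)" for x by (induction x) (auto simp: ev)
  have evo: "(case d of None \<Rightarrow> True | Some a \<Rightarrow> bangfree a) \<Longrightarrow> A.evo (\<lambda>n. El (Var n)) d = El (od d)" for d
    by (cases d) (auto simp: ev)
  have val: "L0_seq t \<Longrightarrow> A.valid (\<lambda>n. El (Var n)) t \<longleftrightarrow> DD cyc R S (Fm (sf (fst t)), Some (od (snd t)))" for t
    by (auto simp: A.valid_def L0_seq_def evs evo E_def bf_id bf_sf od_bf)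
  have "\<forall>t\<in>S. A.valid (\<lambda>n. El (Var n)) t"
  proof
    fix t assume t: "t \<in> S"
    obtain x dd where tt: "t = (x, dd)" by fastforce
    have "DD cyc R S t" using t S by (auto intro: der.leaf)
    then show "A.valid (\<lambda>n. El (Var n)) t" using val S t Lfwd tt by auto
  qed
  then have "A.valid (\<lambda>n. El (Var n)) s" using A.sound d by blast
  then have "DD cyc R S (Fm (sf (fst s)), Some (od (snd s)))" using val s by auto
  then show ?thesis using Lback[of cyc R S "fst s" "snd s"] s by (simp add: L0_seq_def)
qed

theorem mainTheorem17:
  fixes R :: "sr set" and S :: "seq set" and s :: seq
  assumes "\<forall>t\<in>S. L0_seq t" and "L0_seq s"
  shows "(NACCLLm_R R S s \<longleftrightarrow> InFNL_R R S s) \<and> (NACCLL_R R S s \<longleftrightarrow> CyInFNL_R R S s)"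
  using cons[OF assms] der_mono by blast

end
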